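(* Let $n\ge2$, let $D=\{(y,z)\in\mathbb R^2_{>0}:\tfrac{z^2(n+1)}{z^2+n}\le y<1\}$, and let $(x,y,z)$ be the solution on its maximal interval $[0,T_{\max})$ of \[\dot x=nx^2+z^2,\quad \dot y=(n+1)z^2,\quad \dot z=\tfrac{n+1}{n}z\big((n-1)x+y\big),\] with initial condition $(1,y_0,z_0)$ where $(y_0,z_0)\in D$. Then $y,z<x$ on $[0,T_{\max})$ and there exists a constant $C>0$ such that \[\frac{1}{C(T_{\max}-t)}<x(t)<\frac{C}{T_{\max}-t}\qquad\text{for all }t\in[0,T_{\max}).\] *)

theory Defs
  imports Complex_Main "HOL-Library.Extended_Real"
begin

definition half_ival :: "ereal \<Rightarrow> real set" where
  "half_ival T = {t. 0 \<le> t \<and> ereal t < T}"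

definition is_sol ::
  "nat \<Rightarrow> real \<Rightarrow> real \<Rightarrow> ereal \<Rightarrow> (real \<Rightarrow> real) \<Rightarrow> (real \<Rightarrow> real) \<Rightarrow> (real \<Rightarrow> real) \<Rightarrow> bool" where
  "is_sol n y0 z0 T x y z \<longleftrightarrow>
     T > 0 \<and> x 0 = 1 \<and> y 0 = y0 \<and> z 0 = z0 \<and>
     (\<forall>t\<in>half_ival T.
        (x has_real_derivative (real n * (x t)\<^sup>2 + (z t)\<^sup>2)) (at t within half_ival T) \<and>
        (y has_real_derivative ((real n + 1) * (z t)\<^sup>2)) (at t within half_ival T) \<and>
        (z has_real_derivative ((real n + 1) / real n * z t * ((real n - 1) * x t + y t)))
            (at t within half_ival T))"

definition is_max_sol ::
  "nat \<Rightarrow> real \<Rightarrow> real \<Rightarrow> ereal \<Rightarrow> (real \<Rightarrow> real) \<Rightarrow> (real \<Rightarrow> real) \<Rightarrow> (real \<Rightarrow> real) \<Rightarrow> bool" where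
  "is_max_sol n y0 z0 T x y z \<longleftrightarrow>
     is_sol n y0 z0 T x y z \<and>
     \<not> (\<exists>T' x' y' z'. T' > T \<and> is_sol n y0 z0 T' x' y' z' \<and>
          (\<forall>t\<in>half_ival T. x' t = x t \<and> y' t = y t \<and> z' t = z t))"

end

theory Submission
  imports Defs "HOL-Analysis.Analysis"
begin

lemma deriv_nonneg_mono:
  fixes f f' :: "real \<Rightarrow> real"
  assumes ab: "a \<le> b"
    and d: "\<And>t. t \<in> {a..b} \<Longrightarrow> (f has_real_derivative f' t) (at t within {a..b})"
    and nn: "\<And>t. a < t \<Longrightarrow> t < b \<Longrightarrow> f' t \<ge> 0"
  shows "f a \<le> f b"
proof (rule DERIV_nonneg_imp_increasing_open[OF ab])
  show "continuous_on {a..b} f" using d by (rule DERIV_continuous_on)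
  fix t assume t: "a < t" "t < b"
  then have "(f has_real_derivative f' t) (at t)"
    using d[of t] at_within_Icc_at[OF t] by auto
  then show "\<exists>y. (f has_real_derivative y) (at t) \<and> 0 \<le> y" using nn[OF t] by blast
qed

lemma hvd_Un:
  assumes "(f has_vector_derivative D) (at x within S)" "(f has_vector_derivative D) (at x within T)"
  shows "(f has_vector_derivative D) (at x within (S \<union> T))"
  using assms unfolding has_vector_derivative_def has_derivative_within by (auto intro: Lim_Un)

lemma hvd_fst:
  assumes "(f has_vector_derivative D) F"
  shows "((\<lambda>x. fst (f x)) has_vector_derivative fst D) F"
  using has_derivative_fst[OF assms[unfolded has_vector_derivative_def]]
  unfolding has_vector_derivative_def by simp

lemma hvd_snd:
  assumes "(f has_vector_derivative D) F"
  shows "((\<lambda>x. snd (f x)) has_vector_derivative snd D) F"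
  using has_derivative_snd[OF assms[unfolded has_vector_derivative_def]]
  unfolding has_vector_derivative_def by simp

lemma prod_lip:
  fixes u u' v v' R1 R2 :: real
  assumes "\<bar>u'\<bar> \<le> R1" "\<bar>v\<bar> \<le> R2"
  shows "\<bar>u * v - u' * v'\<bar> \<le> R2 * \<bar>u - u'\<bar> + R1 * \<bar>v - v'\<bar>"
proof -
  have "u * v - u' * v' = (u - u') * v + u' * (v - v')" by (simp add: algebra_simps)
  then have "\<bar>u * v - u' * v'\<bar> \<le> \<bar>u - u'\<bar> * \<bar>v\<bar> + \<bar>u'\<bar> * \<bar>v - v'\<bar>"
    by (metis abs_mult abs_triangle_ineq)
  also have "\<dots> \<le> \<bar>u - u'\<bar> * R2 + R1 * \<bar>v - v'\<bar>"
    using assms by (intro add_mono mult_mono) auto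
  finally show ?thesis by (simp add: mult.commute)
qed

lemma norm_triple_le:
  fixes a b c :: real
  shows "norm (a, b, c) \<le> \<bar>a\<bar> + \<bar>b\<bar> + \<bar>c\<bar>"
proof -
  have "norm (a, b, c) \<le> norm a + norm (b, c)" by (rule norm_Pair_le)
  also have "norm (b, c) \<le> norm b + norm c" by (rule norm_Pair_le)
  finally show ?thesis by simp
qed

lemma triple_comp_le:
  fixes w :: "real \<times> real \<times> real"
  shows "\<bar>fst w\<bar> \<le> norm w" "\<bar>fst (snd w)\<bar> \<le> norm w" "\<bar>snd (snd w)\<bar> \<le> norm w"
proof -
  show "\<bar>fst w\<bar> \<le> norm w" using norm_fst_le[of "fst w" "snd w"] by simp
  have "norm (snd w) \<le> norm w" using norm_snd_le[of "snd w" "fst w"] by simp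
  then show "\<bar>fst (snd w)\<bar> \<le> norm w" "\<bar>snd (snd w)\<bar> \<le> norm w"
    using norm_fst_le[of "fst (snd w)" "snd (snd w)"] norm_snd_le[of "snd (snd w)" "fst (snd w)"]
    by simp_all
qed

lemma no_first_zero:
  fixes f :: "real \<Rightarrow> real"
  assumes s: "s > 0" and der: "(f has_real_derivative D) (at s)"
    and pos: "\<And>t. 0 \<le> t \<Longrightarrow> t < s \<Longrightarrow> f t > 0"
    and fs: "f s \<le> 0" and Dpos: "f s = 0 \<Longrightarrow> D > 0"
  shows False
proof (cases "f s = 0")
  case True
  obtain d where d: "d > 0" "\<And>h. h > 0 \<Longrightarrow> h < d \<Longrightarrow> f (s - h) < f s"
    using DERIV_pos_inc_left[OF der Dpos[OF True]] by blast
  define h where "h = min d s / 2"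
  have "h > 0" "h < d" "h < s" using d s by (auto simp: h_def)
  then have "f (s - h) < 0" "f (s - h) > 0" using d True pos[of "s - h"] by auto
  then show False by simp
next
  case False
  then have neg: "f s < 0" using fs by simp
  have "isCont f s" using der by (rule DERIV_isCont)
  then have "(f \<longlongrightarrow> f s) (at s)" by (simp add: isCont_def)
  then have "eventually (\<lambda>t. f t < 0) (at s)" using neg by (rule order_tendstoD(2))
  then obtain d where d: "d > 0" "\<And>t. t \<noteq> s \<Longrightarrow> dist t s < d \<Longrightarrow> f t < 0"
    unfolding eventually_at by auto
  define h where "h = min d s / 2"
  have "h > 0" "h < d" "h < s" using d s by (auto simp: h_def)
  then have "f (s - h) < 0" "f (s - h) > 0" using d(2)[of "s - h"] pos[of "s - h"] by (auto simp: dist_real_def)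
  then show False by simp
qed

lemma picard_local:
  fixes F :: "'a::euclidean_space \<Rightarrow> 'a" and c :: 'a and t0 r L :: real
  assumes r: "r > 0" and L: "L > 0"
    and lip: "\<And>u v. u \<in> cball c r \<Longrightarrow> v \<in> cball c r \<Longrightarrow> norm (F u - F v) \<le> L * norm (u - v)"
  obtains h u where "h > 0" "u t0 = c"
    "\<And>t. t \<in> {t0..t0+h} \<Longrightarrow> (u has_vector_derivative F (u t)) (at t within {t0..t0+h})"
proof -
  define S where "S = cball c r"
  define P where "P = closest_point S"
  have S: "convex S" "closed S" "S \<noteq> {}" using r by (auto simp: S_def)
  have Pin: "P v \<in> S" for v using closest_point_in_set[OF S(2,3)] by (simp add: P_def)
  have Pid: "v \<in> S \<Longrightarrow> P v = v" for v by (simp add: P_def closest_point_self)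
  have Plip: "norm (P v - P w) \<le> norm (v - w)" for v w
    using closest_point_lipschitz[OF S] by (simp add: P_def dist_norm)
  define G where "G = (\<lambda>v. F (P v))"
  define B where "B = norm (F c) + L * r"
  have B0: "B \<ge> 0" using r L by (simp add: B_def)
  have Glip: "norm (G v - G w) \<le> L * norm (v - w)" for v w
  proof -
    have "norm (G v - G w) \<le> L * norm (P v - P w)" unfolding G_def
      using lip Pin S_def by blast
    also have "\<dots> \<le> L * norm (v - w)" using Plip L by (simp add: mult_left_mono)
    finally show ?thesis .
  qed
  have Gb: "norm (G v) \<le> B" for v
  proof -
    have cS: "c \<in> S" using r by (simp add: S_def)
    have "norm (G v) \<le> norm (F c) + norm (F (P v) - F c)"
      unfolding G_def by (metis add.commute diff_add_cancel norm_triangle_ineq)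
    also have "norm (F (P v) - F c) \<le> L * norm (P v - c)" using lip Pin cS S_def by blast
    also have "norm (P v - c) \<le> r" using Pin[of v] by (simp add: S_def dist_norm norm_minus_commute)
    finally show ?thesis unfolding B_def using L by (simp add: mult_left_mono)
  qed
  have Gcont: "continuous_on UNIV G"
  proof -
    have "lipschitz_on L UNIV G" by (rule lipschitz_onI) (use Glip L in \<open>auto simp: dist_norm\<close>)
    then show ?thesis by (intro uniformly_continuous_imp_continuous lipschitz_on_uniformly_continuous)
  qed
  define h where "h = min (1/(2*L)) (r / (B + 1))"
  have h0: "h > 0" using L r B0 by (simp add: h_def)
  have Lh: "L * h \<le> 1/2"
  proof -
    have "L * h \<le> L * (1/(2*L))" using L by (intro mult_left_mono) (auto simp: h_def)
    then show ?thesis using L by simp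
  qed
  have Bh: "B * h \<le> r"
  proof -
    have "B * h \<le> B * (r/(B+1))" using B0 by (intro mult_left_mono) (auto simp: h_def)
    also have "\<dots> \<le> r" using B0 r by (simp add: field_simps)
    finally show ?thesis .
  qed
  define clip where "clip t = max t0 (min t (t0 + h))" for t
  have clip_in: "clip t \<in> {t0..t0+h}" for t using h0 by (auto simp: clip_def)
  have clip_id: "t \<in> {t0..t0+h} \<Longrightarrow> clip t = t" for t by (auto simp: clip_def)
  have clip_cont: "continuous_on UNIV clip" unfolding clip_def by (intro continuous_intros)
  define J where "J k t = c + integral {t0..clip t} k" for k :: "real \<Rightarrow> 'a" and t
  have J_bc: "J k \<in> bcontfun" if kc: "continuous_on UNIV k" and kb: "\<And>s. norm (k s) \<le> B" for k
  proof (rule bcontfun_normI)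
    have "continuous_on {t0..t0+h} (\<lambda>s. integral {t0..s} k)"
      by (intro indefinite_integral_continuous_1 integrable_continuous_interval)
        (use kc continuous_on_subset in blast)
    then have "continuous_on UNIV (\<lambda>t. integral {t0..clip t} k)"
      using continuous_on_compose2[OF _ clip_cont, of "{t0..t0+h}"] clip_in by blast
    then show "continuous_on UNIV (J k)" unfolding J_def by (intro continuous_intros)
    fix t
    have "norm (integral {t0..clip t} k) \<le> B * (clip t - t0)"
      by (rule integral_bound) (use clip_in kb continuous_on_subset[OF kc subset_UNIV] in auto)
    also have "\<dots> \<le> B * h" using clip_in[of t] B0 by (intro mult_left_mono) auto
    finally have "norm (integral {t0..clip t} k) \<le> B * h" .
    then show "norm (J k t) \<le> norm c + B * h" unfolding J_def
      by (meson add_left_mono norm_triangle_ineq order_trans)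
  qed
  define \<Phi> :: "(real \<Rightarrow>\<^sub>C 'a) \<Rightarrow> (real \<Rightarrow>\<^sub>C 'a)" where "\<Phi> f = Bcontfun (J (\<lambda>s. G (apply_bcontfun f s)))" for f
  have Gf_cont: "continuous_on UNIV (\<lambda>s. G (apply_bcontfun f s))" for f :: "real \<Rightarrow>\<^sub>C 'a"
    using continuous_on_compose2[OF Gcont continuous_on_apply_bcontfun[of UNIV f]] by simp
  have \<Phi>_app0: "apply_bcontfun (\<Phi> f) = J (\<lambda>s. G (apply_bcontfun f s))" for f
    unfolding \<Phi>_def by (rule Bcontfun_inverse[OF J_bc[OF Gf_cont Gb]])
  have \<Phi>_app: "apply_bcontfun (\<Phi> f) t = J (\<lambda>s. G (apply_bcontfun f s)) t" for f t
    by (simp add: \<Phi>_app0)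
  have contr: "dist (\<Phi> f) (\<Phi> g) \<le> 1/2 * dist f g" for f g
  proof (rule dist_bound)
    fix t
    have i1: "(\<lambda>s. G (apply_bcontfun f s)) integrable_on {t0..clip t}"
      by (intro integrable_continuous_interval) (use Gf_cont continuous_on_subset in blast)
    have i2: "(\<lambda>s. G (apply_bcontfun g s)) integrable_on {t0..clip t}"
      by (intro integrable_continuous_interval) (use Gf_cont continuous_on_subset in blast)
    have "dist (\<Phi> f t) (\<Phi> g t) = norm (integral {t0..clip t} (\<lambda>s. G (apply_bcontfun f s) - G (apply_bcontfun g s)))"
      unfolding \<Phi>_app J_def dist_norm integral_diff[OF i1 i2] by simp
    also have "\<dots> \<le> (L * dist f g) * (clip t - t0)"
    proof (rule integral_bound)
      show "t0 \<le> clip t" using clip_in[of t] by simp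
      show "continuous_on {t0..clip t} (\<lambda>s. G (apply_bcontfun f s) - G (apply_bcontfun g s))"
        by (intro continuous_intros) (use Gf_cont continuous_on_subset in blast)+
      fix s
      have "norm (G (apply_bcontfun f s) - G (apply_bcontfun g s)) \<le> L * norm (apply_bcontfun f s - apply_bcontfun g s)"
        by (rule Glip)
      also have "\<dots> \<le> L * dist f g" using dist_bounded[of f s g] L by (simp add: dist_norm)
      finally show "norm (G (apply_bcontfun f s) - G (apply_bcontfun g s)) \<le> L * dist f g" .
    qed
    also have "\<dots> \<le> (L * dist f g) * h" using clip_in[of t] L by (intro mult_left_mono) auto
    also have "\<dots> = (L * h) * dist f g" by simp
    also have "\<dots> \<le> 1/2 * dist f g" using Lh by (intro mult_right_mono) auto
    finally show "dist (\<Phi> f t) (\<Phi> g t) \<le> 1/2 * dist f g" .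
  qed
  obtain f where ff: "\<Phi> f = f" using banach_fix_type[of "1/2" \<Phi>] contr by auto
  define u where "u = apply_bcontfun f"
  have ueq: "u t = c + integral {t0..clip t} (\<lambda>s. G (u s))" for t
    using \<Phi>_app[of f t] ff by (simp add: u_def J_def)
  have ucont: "continuous_on UNIV (\<lambda>s. G (u s))" using Gf_cont by (simp add: u_def)
  show ?thesis
  proof
    show "h > 0" by (rule h0)
    show "u t0 = c" using ueq[of t0] clip_id[of t0] h0 by simp
    fix t assume t: "t \<in> {t0..t0+h}"
    have uS: "u t \<in> S"
    proof -
      have "norm (integral {t0..clip t} (\<lambda>s. G (u s))) \<le> B * (clip t - t0)"
        by (rule integral_bound) (use clip_in Gb continuous_on_subset[OF ucont subset_UNIV] in auto)
      also have "\<dots> \<le> B * h" using clip_in[of t] B0 by (intro mult_left_mono) auto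
      finally have "norm (u t - c) \<le> r" using Bh ueq[of t] by simp
      then show ?thesis by (simp add: S_def dist_norm norm_minus_commute)
    qed
    have d: "((\<lambda>t. integral {t0..t} (\<lambda>s. G (u s))) has_vector_derivative G (u t)) (at t within {t0..t0+h})"
      by (rule integral_has_vector_derivative[OF _ t]) (use continuous_on_subset[OF ucont subset_UNIV] in blast)
    have "((\<lambda>t. c + integral {t0..t} (\<lambda>s. G (u s))) has_vector_derivative G (u t)) (at t within {t0..t0+h})"
      using has_vector_derivative_add[OF has_vector_derivative_const d] by simp
    then have "(u has_vector_derivative G (u t)) (at t within {t0..t0+h})"
    proof (rule has_vector_derivative_transform[rotated 2])
      fix s assume s: "s \<in> {t0..t0+h}"
      show "u s = c + integral {t0..s} (\<lambda>s. G (u s))"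
        using ueq[of s] unfolding clip_id[OF s] .
    qed (use t in auto)
    then show "(u has_vector_derivative F (u t)) (at t within {t0..t0+h})"
      using Pid[OF uS] by (simp add: G_def)
  qed
qed

definition FF :: "nat \<Rightarrow> real \<times> real \<times> real \<Rightarrow> real \<times> real \<times> real" where
  "FF n w = (real n * (fst w)\<^sup>2 + (snd (snd w))\<^sup>2, (real n + 1) * (snd (snd w))\<^sup>2,
     (real n + 1) / real n * snd (snd w) * ((real n - 1) * fst w + fst (snd w)))"

lemma FF_cont: "continuous_on S (FF n)"
  unfolding FF_def by (intro continuous_intros)

lemma FF_lip:
  fixes u v :: "real \<times> real \<times> real"
  assumes n: "n \<ge> 1" and u: "norm u \<le> R" and v: "norm v \<le> R"
  shows "norm (FF n u - FF n v) \<le> 6 * (real n + 1) * R * norm (u - v)"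
proof -
  obtain a b c where uu: "u = (a, b, c)" by (cases u) auto
  obtain a' b' c' where vv: "v = (a', b', c')" by (cases v) auto
  define d where "d = norm (u - v)"
  have R0: "R \<ge> 0" using u norm_ge_zero order_trans by blast
  have ra: "\<bar>a\<bar> \<le> R" "\<bar>b\<bar> \<le> R" "\<bar>c\<bar> \<le> R"
    using triple_comp_le[of u] u unfolding uu by auto
  have ra': "\<bar>a'\<bar> \<le> R" "\<bar>b'\<bar> \<le> R" "\<bar>c'\<bar> \<le> R"
    using triple_comp_le[of v] v unfolding vv by auto
  have dd: "\<bar>a - a'\<bar> \<le> d" "\<bar>b - b'\<bar> \<le> d" "\<bar>c - c'\<bar> \<le> d"
    using triple_comp_le[of "u - v"] unfolding d_def uu vv by auto
  have d0: "d \<ge> 0" by (simp add: d_def)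
  have nn: "real n \<ge> 1" using n by simp
  have e_a: "\<bar>a * a - a' * a'\<bar> \<le> 2 * R * d"
  proof -
    have "\<bar>a * a - a' * a'\<bar> \<le> R * \<bar>a - a'\<bar> + R * \<bar>a - a'\<bar>" by (rule prod_lip) (use ra ra' in auto)
    also have "\<dots> \<le> R * d + R * d" using dd R0 by (intro add_mono mult_left_mono) auto
    finally show ?thesis by simp
  qed
  have e_c: "\<bar>c * c - c' * c'\<bar> \<le> 2 * R * d"
  proof -
    have "\<bar>c * c - c' * c'\<bar> \<le> R * \<bar>c - c'\<bar> + R * \<bar>c - c'\<bar>" by (rule prod_lip) (use ra ra' in auto)
    also have "\<dots> \<le> R * d + R * d" using dd R0 by (intro add_mono mult_left_mono) auto
    finally show ?thesis by simp
  qed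
  define A where "A = (real n - 1) * a + b"
  define A' where "A' = (real n - 1) * a' + b'"
  have rA: "\<bar>A\<bar> \<le> real n * R"
  proof -
    have "\<bar>A\<bar> \<le> (real n - 1) * \<bar>a\<bar> + \<bar>b\<bar>" unfolding A_def using nn
      by (metis abs_mult abs_of_nonneg abs_triangle_ineq diff_ge_0_iff_ge)
    also have "\<dots> \<le> (real n - 1) * R + R" using ra nn by (intro add_mono mult_left_mono) auto
    finally show ?thesis by (simp add: algebra_simps)
  qed
  have dA: "\<bar>A - A'\<bar> \<le> real n * d"
  proof -
    have "A - A' = (real n - 1) * (a - a') + (b - b')" by (simp add: A_def A'_def algebra_simps)
    then have "\<bar>A - A'\<bar> \<le> (real n - 1) * \<bar>a - a'\<bar> + \<bar>b - b'\<bar>" using nn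
      by (metis abs_mult abs_of_nonneg abs_triangle_ineq diff_ge_0_iff_ge)
    also have "\<dots> \<le> (real n - 1) * d + d" using dd nn by (intro add_mono mult_left_mono) auto
    finally show ?thesis by (simp add: algebra_simps)
  qed
  have e_3: "\<bar>c * A - c' * A'\<bar> \<le> 2 * real n * R * d"
  proof -
    have "\<bar>c * A - c' * A'\<bar> \<le> (real n * R) * \<bar>c - c'\<bar> + R * \<bar>A - A'\<bar>"
      by (rule prod_lip) (use ra' rA in auto)
    also have "\<dots> \<le> (real n * R) * d + R * (real n * d)"
      using dd dA R0 nn by (intro add_mono mult_left_mono) auto
    finally show ?thesis by (simp add: algebra_simps)
  qed
  have D1: "\<bar>(real n * a\<^sup>2 + c\<^sup>2) - (real n * a'\<^sup>2 + c'\<^sup>2)\<bar> \<le> 2 * (real n + 1) * R * d"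
  proof -
    have "(real n * a\<^sup>2 + c\<^sup>2) - (real n * a'\<^sup>2 + c'\<^sup>2) = real n * (a * a - a' * a') + (c * c - c' * c')"
      by (simp add: algebra_simps power2_eq_square)
    then have "\<bar>(real n * a\<^sup>2 + c\<^sup>2) - (real n * a'\<^sup>2 + c'\<^sup>2)\<bar> \<le> real n * \<bar>a * a - a' * a'\<bar> + \<bar>c * c - c' * c'\<bar>"
      by (metis abs_mult abs_of_nat abs_triangle_ineq)
    also have "\<dots> \<le> real n * (2 * R * d) + 2 * R * d" using e_a e_c by (intro add_mono mult_left_mono) auto
    finally show ?thesis by (simp add: algebra_simps)
  qed
  have D2: "\<bar>(real n + 1) * c\<^sup>2 - (real n + 1) * c'\<^sup>2\<bar> \<le> 2 * (real n + 1) * R * d"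
  proof -
    have "\<bar>(real n + 1) * c\<^sup>2 - (real n + 1) * c'\<^sup>2\<bar> = (real n + 1) * \<bar>c * c - c' * c'\<bar>"
      by (simp add: power2_eq_square abs_mult flip: right_diff_distrib)
    also have "\<dots> \<le> (real n + 1) * (2 * R * d)" using e_c by (intro mult_left_mono) auto
    finally show ?thesis by (simp add: algebra_simps)
  qed
  have D3: "\<bar>(real n + 1) / real n * c * A - (real n + 1) / real n * c' * A'\<bar> \<le> 2 * (real n + 1) * R * d"
  proof -
    have "\<bar>(real n + 1) / real n * c * A - (real n + 1) / real n * c' * A'\<bar>
        = (real n + 1) / real n * \<bar>c * A - c' * A'\<bar>"
    proof -
      have "(real n + 1) / real n * c * A - (real n + 1) / real n * c' * A'
          = (real n + 1) / real n * (c * A - c' * A')" by (simp add: right_diff_distrib)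
      then show ?thesis using nn by (simp add: abs_mult)
    qed
    also have "\<dots> \<le> (real n + 1) / real n * (2 * real n * R * d)" using e_3 nn by (intro mult_left_mono) auto
    also have "\<dots> = 2 * (real n + 1) * R * d" using nn by (simp add: field_simps)
    finally show ?thesis .
  qed
  have "norm (FF n u - FF n v) \<le>
      \<bar>(real n * a\<^sup>2 + c\<^sup>2) - (real n * a'\<^sup>2 + c'\<^sup>2)\<bar> + \<bar>(real n + 1) * c\<^sup>2 - (real n + 1) * c'\<^sup>2\<bar>
      + \<bar>(real n + 1) / real n * c * A - (real n + 1) / real n * c' * A'\<bar>"
    using norm_triple_le unfolding FF_def uu vv A_def A'_def by simp
  also have "\<dots> \<le> 2 * (real n + 1) * R * d + 2 * (real n + 1) * R * d + 2 * (real n + 1) * R * d"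
    by (rule add_mono[OF add_mono[OF D1 D2] D3])
  also have "\<dots> = 6 * (real n + 1) * R * d" by (simp add: algebra_simps)
  finally show ?thesis by (simp add: d_def)
qed

lemma sq_lt:
  fixes a b :: real
  assumes "0 < a - b" "0 < a + b"
  shows "b\<^sup>2 < a\<^sup>2"
proof -
  have "a\<^sup>2 - b\<^sup>2 = (a - b) * (a + b)" by (simp add: algebra_simps power2_eq_square)
  also have "\<dots> > 0" using assms by simp
  finally show ?thesis by simp
qed

theorem lemma3p7:
  fixes n :: nat and y0 z0 :: real and T :: ereal and x y z :: "real \<Rightarrow> real"
  assumes "n \<ge> 2"
    and "y0 > 0" and "z0 > 0"
    and "z0\<^sup>2 * (real n + 1) / (z0\<^sup>2 + real n) \<le> y0" and "y0 < 1"
    and "is_max_sol n y0 z0 T x y z"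
  shows "T < \<infinity> \<and>
         (\<forall>t\<in>half_ival T. y t < x t \<and> z t < x t) \<and>
         (\<exists>C>0. \<forall>t\<in>half_ival T.
              1 / (C * (real_of_ereal T - t)) < x t \<and> x t < C / (real_of_ereal T - t))"
proof -
  define k where "k = (real n + 1) / real n"
  have n2: "real n \<ge> 2" using assms(1) by simp
  have sol: "is_sol n y0 z0 T x y z"
    and maxs: "\<not> (\<exists>T' x' y' z'. T' > T \<and> is_sol n y0 z0 T' x' y' z' \<and>
          (\<forall>t\<in>half_ival T. x' t = x t \<and> y' t = y t \<and> z' t = z t))"
    using assms(6) unfolding is_max_sol_def by blast+
  define I where "I = half_ival T"
  have T0: "T > 0" and x0: "x 0 = 1" and yi: "y 0 = y0" and zi: "z 0 = z0"
    and dx: "\<And>t. t \<in> I \<Longrightarrow> (x has_real_derivative (real n * (x t)\<^sup>2 + (z t)\<^sup>2)) (at t within I)"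
    and dy: "\<And>t. t \<in> I \<Longrightarrow> (y has_real_derivative ((real n + 1) * (z t)\<^sup>2)) (at t within I)"
    and dz: "\<And>t. t \<in> I \<Longrightarrow> (z has_real_derivative (k * z t * ((real n - 1) * x t + y t))) (at t within I)"
    using sol unfolding is_sol_def I_def k_def by auto
  have I0: "0 \<in> I" using T0 by (simp add: I_def half_ival_def zero_ereal_def)
  have Isub: "{a..b} \<subseteq> I" if "a \<in> I" "b \<in> I" for a b
  proof
    fix t assume "t \<in> {a..b}"
    then have "0 \<le> t" "ereal t \<le> ereal b" using that by (auto simp: I_def half_ival_def)
    moreover have "ereal b < T" using that by (auto simp: I_def half_ival_def)
    ultimately have "ereal t < T" "0 \<le> t" using le_less_trans by blast+
    then show "t \<in> I" by (auto simp: I_def half_ival_def)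
  qed
  have monoI: "f a \<le> f b"
    if d: "\<And>t. t \<in> I \<Longrightarrow> (f has_real_derivative f' t) (at t within I)"
      and nn: "\<And>t. t \<in> I \<Longrightarrow> f' t \<ge> 0" and ab: "a \<in> I" "b \<in> I" "a \<le> b" for f f' a b
  proof (rule deriv_nonneg_mono[OF ab(3)])
    fix t assume "t \<in> {a..b}"
    then have "t \<in> I" using Isub[OF ab(1,2)] by auto
    then show "(f has_real_derivative f' t) (at t within {a..b})"
      using DERIV_subset[OF d Isub[OF ab(1,2)]] by blast
  next
    fix t assume "a < t" "t < b"
    then have "t \<in> I" using Isub[OF ab(1,2)] by auto
    then show "f' t \<ge> 0" by (rule nn)
  qed
  have xge1: "x t \<ge> 1" if "t \<in> I" for t
    using monoI[OF dx _ I0 that] x0 that by (auto simp: I_def half_ival_def)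
  have xpos: "x t > 0" if "t \<in> I" for t using xge1[OF that] by simp
  have dphi: "((\<lambda>t. - (1 / x t) - real n * t) has_real_derivative ((z t)\<^sup>2 / (x t)\<^sup>2)) (at t within I)"
    if t: "t \<in> I" for t
  proof -
    have h1: "((\<lambda>t. 1 / x t) has_real_derivative
        (0 * x t - 1 * (real n * (x t)\<^sup>2 + (z t)\<^sup>2)) / (x t * x t)) (at t within I)"
      using xpos[OF t] by (intro DERIV_divide DERIV_const dx t) auto
    have "((\<lambda>t. - (1 / x t) - real n * t) has_real_derivative
        (- ((0 * x t - 1 * (real n * (x t)\<^sup>2 + (z t)\<^sup>2)) / (x t * x t)) - real n * 1)) (at t within I)"
      by (rule DERIV_diff[OF DERIV_minus[OF h1] DERIV_cmult[OF DERIV_ident]])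
    moreover have "- ((0 * x t - 1 * (real n * (x t)\<^sup>2 + (z t)\<^sup>2)) / (x t * x t)) - real n * 1 = (z t)\<^sup>2 / (x t)\<^sup>2"
      using xpos[OF t] by (simp add: field_simps power2_eq_square power4_eq_xxxx)
    ultimately show ?thesis by simp
  qed
  have phi_mono: "1 / x s + real n * s \<le> 1 / x t + real n * t"
    if "t \<in> I" "s \<in> I" "t \<le> s" for s t
    using monoI[OF dphi _ that] by auto
  have Tfin: "T \<le> ereal (1 / real n)"
  proof (rule ccontr)
    assume "\<not> T \<le> ereal (1 / real n)"
    then have "1 / real n \<in> I" using n2 by (auto simp: I_def half_ival_def)
    then have "1 / x (1 / real n) + real n * (1 / real n) \<le> 1 / x 0 + real n * 0"
      using phi_mono[OF I0 _ , of "1 / real n"] n2 by simp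
    then have "1 / x (1 / real n) \<le> 0" using x0 n2 by simp
    then show False using xpos[OF \<open>1 / real n \<in> I\<close>] by simp
  qed
  define Tr where "Tr = real_of_ereal T"
  have TTr: "T = ereal Tr" using T0 Tfin unfolding Tr_def by (cases T) auto
  have Tr0: "Tr > 0" using T0 TTr by simp
  have Ieq: "I = {0..<Tr}" by (auto simp: I_def half_ival_def TTr)
  have Tinf: "T < \<infinity>" using TTr by simp
  have intI: "at t within I = at t" if "0 < t" "t < Tr" for t
    using that by (intro at_within_interior) (simp add: Ieq)
  have z0lt: "z0 < 1"
  proof -
    have pos: "z0\<^sup>2 + real n > 0" using n2 by (simp add: add_nonneg_pos)
    have "z0\<^sup>2 * (real n + 1) / (z0\<^sup>2 + real n) < 1" using assms(4,5) by linarith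
    then have "z0\<^sup>2 * (real n + 1) < z0\<^sup>2 + real n"
      using pos by (simp add: pos_divide_less_eq)
    then have "real n * z0\<^sup>2 < real n * 1" by (simp add: algebra_simps)
    then have "z0\<^sup>2 < 1" using n2 by simp
    then show ?thesis using assms(3) by (smt (verit) one_le_power)
  qed
  have contx: "continuous_on I x" using dx by (rule DERIV_continuous_on)
  have conty: "continuous_on I y" using dy by (rule DERIV_continuous_on)
  have contz: "continuous_on I z" using dz by (rule DERIV_continuous_on)
  define m where "m t = min (x t - y t) (min (x t - z t) (x t + z t))" for t
  have minv: "\<forall>t\<in>I. m t > 0"
  proof (rule ccontr)
    assume "\<not> (\<forall>t\<in>I. m t > 0)"
    then obtain t1 where t1: "t1 \<in> I" "m t1 \<le> 0" by auto
    define K where "K = {0..t1} \<inter> m -` {..0}"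
    have sub1: "{0..t1} \<subseteq> I" using Isub[OF I0 t1(1)] .
    have contm: "continuous_on {0..t1} m" unfolding m_def
      by (intro continuous_intros continuous_on_subset[OF contx sub1]
          continuous_on_subset[OF conty sub1] continuous_on_subset[OF contz sub1])
    have Kc: "closed K" unfolding K_def by (intro continuous_closed_preimage contm) auto
    have t1K: "t1 \<in> K" using t1 by (auto simp: K_def I_def half_ival_def)
    have Kb: "bdd_below K" by (rule bdd_belowI[of _ 0]) (auto simp: K_def)
    define s where "s = Inf K"
    have sK: "s \<in> K" unfolding s_def using closed_contains_Inf[OF _ Kb Kc] t1K by blast
    then have s01: "0 \<le> s" "s \<le> t1" and ms: "m s \<le> 0" by (auto simp: K_def)
    have below: "m \<tau> > 0" if "0 \<le> \<tau>" "\<tau> < s" for \<tau>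
    proof (rule ccontr)
      assume "\<not> m \<tau> > 0"
      then have "\<tau> \<in> K" using that s01 by (auto simp: K_def)
      then have "s \<le> \<tau>" unfolding s_def by (rule cInf_lower[OF _ Kb])
      then show False using that by simp
    qed
    have m0: "m 0 > 0" using x0 yi zi assms(2,3,5) z0lt by (simp add: m_def)
    have s0: "s > 0" using s01 ms m0 by (cases "s = 0") auto
    have sI: "s \<in> I" using sub1 s01 by auto
    have sTr: "s < Tr" using sI Ieq by auto
    have atS: "at s within I = at s" by (rule intI[OF s0 sTr])
    have ps: "x s - y s > 0"
    proof -
      have "x 0 - y 0 \<le> x s - y s"
      proof (rule deriv_nonneg_mono[OF s01(1), where f' = "\<lambda>t. real n * (x t)\<^sup>2 + (z t)\<^sup>2 - (real n + 1) * (z t)\<^sup>2"])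
        fix t assume t: "t \<in> {0..s}"
        then have tI: "t \<in> I" using sub1 s01 by auto
        have "{0..s} \<subseteq> I" using sub1 s01 by auto
        then show "((\<lambda>t. x t - y t) has_real_derivative real n * (x t)\<^sup>2 + (z t)\<^sup>2 - (real n + 1) * (z t)\<^sup>2) (at t within {0..s})"
          using tI by (intro derivative_intros DERIV_subset[OF dx] DERIV_subset[OF dy]) auto
      next
        fix t assume t: "0 < t" "t < s"
        then have "m t > 0" using below by auto
        then have "x t - z t > 0" "x t + z t > 0" by (auto simp: m_def)
        then have "(z t)\<^sup>2 \<le> (x t)\<^sup>2"
          using sq_lt[of "x t" "z t"] by simp
        then show "real n * (x t)\<^sup>2 + (z t)\<^sup>2 - (real n + 1) * (z t)\<^sup>2 \<ge> 0"
          by (simp add: algebra_simps mult_left_mono)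
      qed
      then show ?thesis using x0 yi assms(5) by simp
    qed
    have xs: "x s > 0" using xpos[OF sI] .
    have key: "k * x s * (x s - y s) > 0" using xs ps n2 by (simp add: k_def)
    have "x s - z s \<le> 0 \<or> x s + z s \<le> 0" using ms ps by (auto simp: m_def)
    then show False
    proof
      assume q: "x s - z s \<le> 0"
      show False
      proof (rule no_first_zero[where f = "\<lambda>t. x t - z t", OF s0 _ _ q])
        show "((\<lambda>t. x t - z t) has_real_derivative
            (real n * (x s)\<^sup>2 + (z s)\<^sup>2 - k * z s * ((real n - 1) * x s + y s))) (at s)"
          using dx[OF sI] dz[OF sI] unfolding atS by (intro derivative_intros) auto
        show "x t - z t > 0" if "0 \<le> t" "t < s" for t using below[OF that] by (simp add: m_def)
        assume "x s - z s = 0"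
        then have zx: "z s = x s" by simp
        have "real n * (x s)\<^sup>2 + (z s)\<^sup>2 - k * z s * ((real n - 1) * x s + y s) = k * x s * (x s - y s)"
          unfolding zx k_def using n2 by (simp add: field_simps power2_eq_square)
        then show "real n * (x s)\<^sup>2 + (z s)\<^sup>2 - k * z s * ((real n - 1) * x s + y s) > 0"
          using key by simp
      qed
    next
      assume r: "x s + z s \<le> 0"
      show False
      proof (rule no_first_zero[where f = "\<lambda>t. x t + z t", OF s0 _ _ r])
        show "((\<lambda>t. x t + z t) has_real_derivative
            (real n * (x s)\<^sup>2 + (z s)\<^sup>2 + k * z s * ((real n - 1) * x s + y s))) (at s)"
          using dx[OF sI] dz[OF sI] unfolding atS by (intro derivative_intros) auto
        show "x t + z t > 0" if "0 \<le> t" "t < s" for t using below[OF that] by (simp add: m_def)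
        assume "x s + z s = 0"
        then have zx: "z s = - x s" by simp
        have "real n * (x s)\<^sup>2 + (z s)\<^sup>2 + k * z s * ((real n - 1) * x s + y s) = k * x s * (x s - y s)"
          unfolding zx k_def using n2 by (simp add: field_simps power2_eq_square)
        then show "real n * (x s)\<^sup>2 + (z s)\<^sup>2 + k * z s * ((real n - 1) * x s + y s) > 0"
          using key by simp
      qed
    qed
  qed
  have yx: "y t < x t" and zx: "z t < x t" and zx': "- x t < z t" if "t \<in> I" for t
    using minv that by (auto simp: m_def)
  have dpsi: "((\<lambda>t. 1 / x t + (real n + 1) * t) has_real_derivative
      ((0 * x t - 1 * (real n * (x t)\<^sup>2 + (z t)\<^sup>2)) / (x t * x t) + (real n + 1) * 1)) (at t within I)"
    if t: "t \<in> I" for t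
  proof -
    have h1: "((\<lambda>t. 1 / x t) has_real_derivative
        (0 * x t - 1 * (real n * (x t)\<^sup>2 + (z t)\<^sup>2)) / (x t * x t)) (at t within I)"
      using xpos[OF t] by (intro DERIV_divide DERIV_const dx t) auto
    show ?thesis by (rule DERIV_add[OF h1 DERIV_cmult[OF DERIV_ident]])
  qed
  have dpsi_nn: "(0 * x t - 1 * (real n * (x t)\<^sup>2 + (z t)\<^sup>2)) / (x t * x t) + (real n + 1) * 1 \<ge> 0"
    if t: "t \<in> I" for t
  proof -
    have "(z t)\<^sup>2 < (x t)\<^sup>2" using sq_lt[of "x t" "z t"] zx[OF t] zx'[OF t] by simp
    then have "real n * (x t)\<^sup>2 + (z t)\<^sup>2 \<le> (real n + 1) * (x t * x t)"
      by (simp add: algebra_simps power2_eq_square)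
    then have "(real n * (x t)\<^sup>2 + (z t)\<^sup>2) / (x t * x t) \<le> real n + 1"
      using xpos[OF t] by (simp add: divide_le_eq)
    moreover have E: "(0 * x t - 1 * (real n * (x t)\<^sup>2 + (z t)\<^sup>2)) / (x t * x t)
        = - ((real n * (x t)\<^sup>2 + (z t)\<^sup>2) / (x t * x t))" by (simp add: divide_simps)
    ultimately show ?thesis unfolding mult_1_right E by linarith
  qed
  have psi_mono: "1 / x t + (real n + 1) * t \<le> 1 / x s + (real n + 1) * s"
    if "t \<in> I" "s \<in> I" "t \<le> s" for s t
    by (rule monoI[OF dpsi dpsi_nn that])
  have upper: "x t \<le> 1 / (real n * (Tr - t))" if t: "t \<in> I" for t
  proof -
    have tTr: "t < Tr" "0 \<le> t" using t Ieq by auto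
    have xt: "x t > 0" using xpos[OF t] .
    have "real n * (Tr - t) \<le> 1 / x t"
    proof (rule ccontr)
      assume "\<not> real n * (Tr - t) \<le> 1 / x t"
      then have lt: "1 / x t < real n * (Tr - t)" by simp
      define s where "s = t + 1 / (real n * x t)"
      have "s < Tr" using lt n2 xt unfolding s_def by (simp add: field_simps)
      moreover have "t \<le> s" using n2 xt by (simp add: s_def)
      ultimately have sI: "s \<in> I" using tTr Ieq by auto
      have "1 / x s + real n * s \<le> 1 / x t + real n * t" using phi_mono[OF t sI \<open>t \<le> s\<close>] .
      moreover have "real n * s = real n * t + 1 / x t" using n2 xt by (simp add: s_def field_simps)
      ultimately have "1 / x s \<le> 0" by linarith
      then show False using xpos[OF sI] by simp
    qed
    then have "x t * (real n * (Tr - t)) \<le> 1" using xt by (simp add: field_simps)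
    then show ?thesis using tTr n2 xt by (simp add: field_simps)
  qed
  have blow: "\<exists>s\<in>I. x s > M" for M
  proof (rule ccontr)
    assume "\<not> (\<exists>s\<in>I. x s > M)"
    then have xM: "x s \<le> M" if "s \<in> I" for s using that by auto
    have M1: "M \<ge> 1" using xM[OF I0] x0 by simp
    have yge: "y s \<ge> y0" if s: "s \<in> I" for s
    proof -
      have "y 0 \<le> y s"
        by (rule monoI[OF dy _ I0 s]) (use s in \<open>auto simp: I_def half_ival_def\<close>)
      then show ?thesis using yi by simp
    qed
    define F where "F = FF n"
    define W where "W t = (x t, y t, z t)" for t
    have dW: "(W has_vector_derivative F (W t)) (at t within I)" if t: "t \<in> I" for t
    proof -
      have "((\<lambda>t. (x t, y t, z t)) has_vector_derivative
          (real n * (x t)\<^sup>2 + (z t)\<^sup>2, (real n + 1) * (z t)\<^sup>2, k * z t * ((real n - 1) * x t + y t)))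
          (at t within I)"
        using dx[OF t] dy[OF t] dz[OF t] unfolding has_real_derivative_iff_has_vector_derivative
        by (intro has_vector_derivative_Pair)
      then show ?thesis by (simp add: W_def[abs_def] F_def FF_def k_def)
    qed
    have Fcont: "continuous_on S F" for S unfolding F_def by (rule FF_cont)
    have Wbd: "norm (W t) \<le> 3 * M" if t: "t \<in> I" for t
    proof -
      have "\<bar>x t\<bar> \<le> M" "\<bar>y t\<bar> \<le> M" "\<bar>z t\<bar> \<le> M"
        using xM[OF t] xpos[OF t] yge[OF t] yx[OF t] zx[OF t] zx'[OF t] assms(2) by auto
      then show ?thesis using norm_triple_le[of "x t" "y t" "z t"] by (simp add: W_def)
    qed
    have "bounded (F ` cball 0 (3 * M))"
      by (intro compact_imp_bounded compact_continuous_image Fcont compact_cball)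
    then obtain KF where KF: "KF > 0" "\<And>w. w \<in> cball 0 (3 * M) \<Longrightarrow> norm (F w) \<le> KF"
      unfolding bounded_pos by auto
    have FWb: "norm (F (W t)) \<le> KF" if "t \<in> I" for t using KF(2)[of "W t"] Wbd[OF that] by simp
    have contW: "continuous_on I W"
      unfolding continuous_on_eq_continuous_within using dW has_vector_derivative_continuous by blast
    have Wlip1: "norm (W t - W s) \<le> KF * (t - s)" if st: "s \<in> I" "t \<in> I" "s \<le> t" for s t
    proof (cases "s = t")
      case True then show ?thesis by simp
    next
      case False
      then have slt: "s < t" using st by simp
      have sub: "{s..t} \<subseteq> I" using Isub[OF st(1,2)] .
      obtain \<xi> where \<xi>: "\<xi> \<in> {s<..<t}" "norm (W t - W s) \<le> norm ((t - s) *\<^sub>R F (W \<xi>))"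
      proof (rule exE[OF bexE[OF mvt_general[OF slt continuous_on_subset[OF contW sub],
            where f' = "\<lambda>\<xi> h. h *\<^sub>R F (W \<xi>)"]]])
        fix \<xi> assume \<xi>: "s < \<xi>" "\<xi> < t"
        have \<xi>I: "\<xi> \<in> I" using sub \<xi> by auto
        have "0 < \<xi>" "\<xi> < Tr" using \<xi> st Ieq by auto
        then have "at \<xi> within I = at \<xi>" by (rule intI)
        then show "(W has_derivative (\<lambda>h. h *\<^sub>R F (W \<xi>))) (at \<xi>)"
          using dW[OF \<xi>I] unfolding has_vector_derivative_def by simp
      next
        fix \<xi> assume "\<xi> \<in> {s<..<t}" "norm (W t - W s) \<le> norm ((t - s) *\<^sub>R F (W \<xi>))"
        then show "\<exists>\<xi>. \<xi> \<in> {s<..<t} \<and> norm (W t - W s) \<le> norm ((t - s) *\<^sub>R F (W \<xi>))" by blast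
      qed auto
      have "\<xi> \<in> I" using sub \<xi>(1) by auto
      then have "norm ((t - s) *\<^sub>R F (W \<xi>)) \<le> (t - s) * KF" using FWb slt by (simp add: mult_left_mono)
      then show ?thesis using \<xi>(2) by (simp add: mult.commute)
    qed
    have "lipschitz_on KF I W"
    proof (rule lipschitz_onI)
      fix s t assume st: "s \<in> I" "t \<in> I"
      show "dist (W s) (W t) \<le> KF * dist s t"
      proof (cases "s \<le> t")
        case True then show ?thesis using Wlip1[OF st True] by (simp add: dist_norm norm_minus_commute dist_real_def)
      next
        case False then show ?thesis using Wlip1[OF st(2,1)] by (simp add: dist_norm dist_real_def)
      qed
    qed (use KF in simp)
    then have ucW: "uniformly_continuous_on I W" by (rule lipschitz_on_uniformly_continuous)
    obtain Wb where ucWb: "uniformly_continuous_on (closure I) Wb" and eqWb: "\<And>t. t \<in> I \<Longrightarrow> W t = Wb t"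
      using uniformly_continuous_on_extension_on_closure[OF ucW] by metis
    have clI: "closure I = {0..Tr}" using Tr0 by (simp add: Ieq)
    have contWb: "continuous_on {0..Tr} Wb"
      using uniformly_continuous_imp_continuous[OF ucWb] clI by simp
    have dWb_int: "(Wb has_vector_derivative F (Wb \<xi>)) (at \<xi>)" if \<xi>: "0 < \<xi>" "\<xi> < Tr" for \<xi>
    proof -
      have \<xi>I: "\<xi> \<in> I" using \<xi> Ieq by auto
      have "(W has_vector_derivative F (W \<xi>)) (at \<xi>)" using dW[OF \<xi>I] intI[OF \<xi>] by simp
      then have "(Wb has_vector_derivative F (W \<xi>)) (at \<xi>)"
        by (rule has_vector_derivative_transform_within_open[where S = "{0<..<Tr}"]) (use \<xi> eqWb Ieq in auto)
      then show ?thesis using eqWb[OF \<xi>I] by simp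
    qed
    have contFWb: "continuous_on {0..Tr} (\<lambda>\<xi>. F (Wb \<xi>))"
      by (rule continuous_on_compose2[OF Fcont contWb]) auto
    have Wb_int: "Wb t = Wb 0 + integral {0..t} (\<lambda>\<xi>. F (Wb \<xi>))" if t: "t \<in> {0..Tr}" for t
    proof -
      have "((\<lambda>\<xi>. F (Wb \<xi>)) has_integral (Wb t - Wb 0)) {0..t}"
      proof (rule fundamental_theorem_of_calculus_interior)
        show "0 \<le> t" using t by simp
        show "continuous_on {0..t} Wb" using continuous_on_subset[OF contWb] t by auto
        fix \<xi> assume "\<xi> \<in> {0<..<t}"
        then show "(Wb has_vector_derivative F (Wb \<xi>)) (at \<xi>)" using dWb_int t by auto
      qed
      then show ?thesis by (simp add: integral_unique)
    qed
    have dWb: "(Wb has_vector_derivative F (Wb t)) (at t within {0..Tr})" if t: "t \<in> {0..Tr}" for t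
    proof -
      have d: "((\<lambda>u. integral {0..u} (\<lambda>\<xi>. F (Wb \<xi>))) has_vector_derivative F (Wb t)) (at t within {0..Tr})"
        by (rule integral_has_vector_derivative[OF contFWb t])
      have "((\<lambda>u. Wb 0 + integral {0..u} (\<lambda>\<xi>. F (Wb \<xi>))) has_vector_derivative F (Wb t)) (at t within {0..Tr})"
        using has_vector_derivative_add[OF has_vector_derivative_const d] by simp
      then show ?thesis
      proof (rule has_vector_derivative_transform[rotated 2])
        fix s assume s: "s \<in> {0..Tr}"
        show "Wb s = Wb 0 + integral {0..s} (\<lambda>\<xi>. F (Wb \<xi>))" by (rule Wb_int[OF s])
      qed (use t in auto)
    qed
    define c where "c = Wb Tr"
    define R where "R = norm c + 1"
    have lipc: "norm (F u - F v) \<le> (6 * (real n + 1) * R + 1) * norm (u - v)"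
      if "u \<in> cball c 1" "v \<in> cball c 1" for u v
    proof -
      have "norm u \<le> R" "norm v \<le> R" using that norm_triangle_sub[of u c] norm_triangle_sub[of v c]
        by (auto simp: R_def dist_norm norm_minus_commute)
      then have "norm (F u - F v) \<le> 6 * (real n + 1) * R * norm (u - v)"
        unfolding F_def using assms(1) by (intro FF_lip) auto
      also have "\<dots> \<le> (6 * (real n + 1) * R + 1) * norm (u - v)"
        by (intro mult_right_mono) auto
      finally show ?thesis .
    qed
    have R0: "R \<ge> 0" by (simp add: R_def)
    then have "6 * (real n + 1) * R \<ge> 0" by simp
    then have Lpos: "6 * (real n + 1) * R + 1 > 0" by linarith
    obtain h u where h0: "h > 0" and uT: "u Tr = c"
      and du: "\<And>t. t \<in> {Tr..Tr+h} \<Longrightarrow> (u has_vector_derivative F (u t)) (at t within {Tr..Tr+h})"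
      using picard_local[of 1 "6 * (real n + 1) * R + 1" c F Tr, OF _ Lpos lipc] by auto
    define V where "V t = (if t \<le> Tr then Wb t else u t)" for t
    have dV: "(V has_vector_derivative F (V t)) (at t within {0..<Tr+h})" if t: "t \<in> {0..<Tr+h}" for t
    proof -
      consider "t < Tr" | "t = Tr" | "t > Tr" by linarith
      then show ?thesis
      proof cases
        case 1
        have "(Wb has_vector_derivative F (Wb t)) (at t within {0..Tr})" using dWb t 1 by auto
        then have "(V has_vector_derivative F (Wb t)) (at t within {0..Tr})"
          by (rule has_vector_derivative_transform[rotated 2]) (use t 1 in \<open>auto simp: V_def\<close>)
        moreover have "at t within {0..<Tr+h} = at t within {0..Tr}"
          by (rule at_within_nhd[of _ "{..<Tr}"]) (use 1 h0 in auto)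
        ultimately show ?thesis using 1 by (simp add: V_def)
      next
        case 2
        have a: "(V has_vector_derivative F (Wb Tr)) (at Tr within {0..Tr})"
          by (rule has_vector_derivative_transform[rotated 2, OF dWb]) (use Tr0 in \<open>auto simp: V_def\<close>)
        have "(u has_vector_derivative F (u Tr)) (at Tr within {Tr..Tr+h})" using du h0 by auto
        then have "(u has_vector_derivative F (Wb Tr)) (at Tr within {Tr..Tr+h})" using uT by (simp add: c_def)
        then have b: "(V has_vector_derivative F (Wb Tr)) (at Tr within {Tr..Tr+h})"
          by (rule has_vector_derivative_transform[rotated 2]) (use h0 uT in \<open>auto simp: V_def c_def\<close>)
        have "(V has_vector_derivative F (Wb Tr)) (at Tr within ({0..Tr} \<union> {Tr..Tr+h}))"
          by (rule hvd_Un[OF a b])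
        then have "(V has_vector_derivative F (Wb Tr)) (at Tr within {0..<Tr+h})"
          by (rule has_vector_derivative_within_subset) auto
        then show ?thesis using 2 by (simp add: V_def)
      next
        case 3
        have "(u has_vector_derivative F (u t)) (at t within {Tr..Tr+h})" using du t 3 by auto
        then have "(u has_vector_derivative F (u t)) (at t within {Tr..<Tr+h})"
          by (rule has_vector_derivative_within_subset) auto
        then have "(V has_vector_derivative F (u t)) (at t within {Tr..<Tr+h})"
          by (rule has_vector_derivative_transform[rotated 2]) (use t 3 uT in \<open>auto simp: V_def c_def\<close>)
        moreover have "at t within {0..<Tr+h} = at t within {Tr..<Tr+h}"
          by (rule at_within_nhd[of _ "{Tr<..}"]) (use 3 Tr0 in auto)
        ultimately show ?thesis using 3 by (simp add: V_def)
      qed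
    qed
    define x' where "x' t = fst (V t)" for t
    define y' where "y' t = fst (snd (V t))" for t
    define z' where "z' t = snd (snd (V t))" for t
    have hv: "half_ival (ereal (Tr + h)) = {0..<Tr+h}" by (auto simp: half_ival_def)
    have V_I: "V t = W t" if "t \<in> I" for t using that eqWb Ieq by (auto simp: V_def)
    have sol': "is_sol n y0 z0 (ereal (Tr + h)) x' y' z'"
      unfolding is_sol_def hv
    proof (intro conjI ballI)
      show "0 < ereal (Tr + h)" using Tr0 h0 by simp
      show "x' 0 = 1" "y' 0 = y0" "z' 0 = z0"
        using V_I[OF I0] x0 yi zi by (auto simp: x'_def y'_def z'_def W_def)
      fix t assume t: "t \<in> {0..<Tr+h}"
      note d = dV[OF t]
      show "(x' has_real_derivative real n * (x' t)\<^sup>2 + (z' t)\<^sup>2) (at t within {0..<Tr+h})"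
        using hvd_fst[OF d] unfolding has_real_derivative_iff_has_vector_derivative
        by (simp add: x'_def[abs_def] z'_def F_def FF_def)
      show "(y' has_real_derivative (real n + 1) * (z' t)\<^sup>2) (at t within {0..<Tr+h})"
        using hvd_fst[OF hvd_snd[OF d]] unfolding has_real_derivative_iff_has_vector_derivative
        by (simp add: y'_def[abs_def] z'_def F_def FF_def)
      show "(z' has_real_derivative (real n + 1) / real n * z' t * ((real n - 1) * x' t + y' t)) (at t within {0..<Tr+h})"
        using hvd_snd[OF hvd_snd[OF d]] unfolding has_real_derivative_iff_has_vector_derivative
        by (simp add: x'_def y'_def z'_def[abs_def] F_def FF_def)
    qed
    have agree: "\<forall>t\<in>half_ival T. x' t = x t \<and> y' t = y t \<and> z' t = z t"
      using V_I by (auto simp: I_def x'_def y'_def z'_def W_def)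
    have "ereal (Tr + h) > T" using TTr h0 by simp
    then show False using maxs sol' agree by blast
  qed
  have lower: "1 / ((real n + 1) * (Tr - t)) \<le> x t" if t: "t \<in> I" for t
  proof -
    have tTr: "t < Tr" "0 \<le> t" using t Ieq by auto
    have xt: "x t > 0" using xpos[OF t] .
    have "1 / x t \<le> (real n + 1) * (Tr - t)"
    proof (rule ccontr)
      assume "\<not> 1 / x t \<le> (real n + 1) * (Tr - t)"
      then have eps: "1 / x t - (real n + 1) * (Tr - t) > 0" by simp
      define e where "e = 1 / x t - (real n + 1) * (Tr - t)"
      obtain s0 where s0: "s0 \<in> I" "x s0 > 1 / e" using blow by blast
      define s where "s = max s0 t"
      have sI: "s \<in> I" using s0 t by (simp add: s_def max_def)
      have ts: "t \<le> s" by (simp add: s_def)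
      have "x s0 \<le> x s"
      proof (cases "s0 \<le> t")
        case True
        then show ?thesis using monoI[OF dx _ s0(1) t True] by (simp add: s_def max_def)
      qed (simp add: s_def)
      then have xs: "x s > 1 / e" using s0 by simp
      have e0: "e > 0" using eps by (simp add: e_def)
      then have "1 / x s < e" using xs e0 xpos[OF sI] by (simp add: field_simps)
      moreover have "1 / x t \<le> 1 / x s + (real n + 1) * (s - t)"
        using psi_mono[OF t sI ts] by (simp add: algebra_simps)
      moreover have "s < Tr" using sI Ieq by auto
      ultimately have "1 / x t < e + (real n + 1) * (Tr - t)"
        using n2 by (smt (verit) mult_left_mono of_nat_0_le_iff)
      then show False by (simp add: e_def)
    qed
    then have "1 \<le> ((real n + 1) * (Tr - t)) * x t" using xt by (simp add: pos_divide_le_eq)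
    moreover have D: "(real n + 1) * (Tr - t) > 0" using tTr by simp
    ultimately show ?thesis by (simp add: pos_divide_le_eq mult.commute)
  qed
  show ?thesis
  proof (intro conjI)
    show "T < \<infinity>" by (rule Tinf)
    show "\<forall>t\<in>half_ival T. y t < x t \<and> z t < x t" using yx zx by (simp add: I_def)
    show "\<exists>C>0. \<forall>t\<in>half_ival T.
              1 / (C * (real_of_ereal T - t)) < x t \<and> x t < C / (real_of_ereal T - t)"
    proof (intro exI[of _ "real n + 2"] conjI ballI)
      show "real n + 2 > 0" by simp
      fix t assume "t \<in> half_ival T"
      then have t: "t \<in> I" by (simp add: I_def)
      have d: "Tr - t > 0" using t Ieq by auto
      have TT: "real_of_ereal T = Tr" by (simp add: Tr_def)
      have "1 / ((real n + 2) * (Tr - t)) < 1 / ((real n + 1) * (Tr - t))"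
        using d by (intro divide_strict_left_mono mult_strict_right_mono) auto
      then show "1 / ((real n + 2) * (real_of_ereal T - t)) < x t" using lower[OF t] TT by simp
      have "1 / real n < 1" using n2 by simp
      then have "1 / real n < real n + 2" by linarith
      then have "1 / real n / (Tr - t) < (real n + 2) / (Tr - t)"
        using d by (rule divide_strict_right_mono)
      then have "1 / (real n * (Tr - t)) < (real n + 2) / (Tr - t)"
        by (simp add: divide_divide_eq_left)
      then show "x t < (real n + 2) / (real_of_ereal T - t)" using upper[OF t] TT by simp
    qed
  qed
qed

end
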